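(* For all integers $n\geq 1$ and all real $x\in(0,2\pi/3)$, $$\sum_{k=1}^n (n-k+1)(n-k+2)\,k\sin(kx)>\frac{2}{9}\sin(x)\bigl(1+2\cos(x)\bigr)^2,$$ and the constant $2/9$ is best possible: the inequality $\sum_{k=1}^n (n-k+1)(n-k+2)k\sin(kx)>\lambda\sin(x)(1+2\cos x)^2$ for all $n\ge1$, $x\in(0,2\pi/3)$ fails for every $\lambda>2/9$. *)

theory Defs
  imports Complex_Main
begin

end

theory Submission
  imports Defs "HOL-Analysis.Analysis"
begin


lemma closed_a:
  fixes h :: real
  shows "4 * sin h ^ 2 * (\<Sum>k=1..n. real k * sin (real k * (2*h)))
        = cos h * sin ((2*real n+1)*h) - (2*real n+1) * sin h * cos ((2*real n+1)*h)"
proof (induction n)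
  case 0
  then show ?case by (simp add: mult.commute)
next
  case (Suc n)
  define X where "X = sin ((2*real n+1)*h)"
  define Y where "Y = cos ((2*real n+1)*h)"
  have e1: "(2*real (Suc n)+1)*h = (2*real n+1)*h + 2*h" by (simp add: algebra_simps)
  have e2: "real (Suc n) * (2*h) = (2*real n+1)*h + h" by (simp add: algebra_simps)
  have p: "sin h ^ 2 + cos h ^ 2 = 1" by simp
  have s1: "sin ((2*real (Suc n)+1)*h) = X * (cos h ^ 2 - sin h ^ 2) + Y * (2 * sin h * cos h)"
    unfolding e1 sin_add X_def Y_def cos_double sin_double by simp
  have c1: "cos ((2*real (Suc n)+1)*h) = Y * (cos h ^ 2 - sin h ^ 2) - X * (2 * sin h * cos h)"
    unfolding e1 cos_add X_def Y_def cos_double sin_double by simp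
  have s2: "sin (real (Suc n) * (2*h)) = X * cos h + Y * sin h"
    unfolding e2 sin_add X_def Y_def by simp
  have alg: "C * X' - (2*N+1) * S * Y' + 4 * S ^ 2 * ((N+1) * (X' * C + Y' * S))
     = C * (X' * (C ^ 2 - S ^ 2) + Y' * (2 * S * C)) - (2*(N+1)+1) * S * (Y' * (C ^ 2 - S ^ 2) - X' * (2 * S * C))"
    if "S^2 + C^2 = 1" for S C X' Y' N :: real using that by algebra
  have "4 * sin h ^ 2 * (\<Sum>k=1..Suc n. real k * sin (real k * (2*h)))
      = 4 * sin h ^ 2 * (\<Sum>k=1..n. real k * sin (real k * (2*h))) + 4 * sin h ^ 2 * (real (Suc n) * sin (real (Suc n) * (2*h)))"
    by (simp add: algebra_simps)
  also have "\<dots> = cos h * X - (2*real n+1) * sin h * Y + 4 * sin h ^ 2 * ((real n + 1) * (X * cos h + Y * sin h))"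
    using Suc.IH X_def Y_def s2 by simp
  also have "\<dots> = cos h * sin ((2*real (Suc n)+1)*h) - (2*real (Suc n)+1) * sin h * cos ((2*real (Suc n)+1)*h)"
    unfolding s1 c1 using alg[OF p] by simp
  finally show ?case .
qed

lemma closed_b:
  fixes h :: real
  shows "4 * sin h ^ 3 * (\<Sum>k=1..n. (real n - real k + 1) * real k * sin (real k * (2*h)))
        = sin h * (sin (2*h) - (real n + 1) * sin ((2*real n+2)*h)) + cos h * (cos (2*h) - cos ((2*real n+2)*h))"
proof (induction n)
  case 0
  then show ?case by simp
next
  case (Suc n)
  define X where "X = sin ((2*real n+2)*h)"
  define Y where "Y = cos ((2*real n+2)*h)"
  have e1: "(2*real (Suc n)+2)*h = (2*real n+2)*h + 2*h" by (simp add: algebra_simps)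
  have e2: "(2*real (Suc n)+1)*h = (2*real n+2)*h + h" by (simp add: algebra_simps)
  have p: "sin h ^ 2 + cos h ^ 2 = 1" by simp
  have s1: "sin ((2*real (Suc n)+2)*h) = X * (cos h ^ 2 - sin h ^ 2) + Y * (2 * sin h * cos h)"
    unfolding e1 sin_add X_def Y_def cos_double sin_double by simp
  have c1: "cos ((2*real (Suc n)+2)*h) = Y * (cos h ^ 2 - sin h ^ 2) - X * (2 * sin h * cos h)"
    unfolding e1 cos_add X_def Y_def cos_double sin_double by simp
  have s2: "sin ((2*real (Suc n)+1)*h) = X * cos h + Y * sin h"
    unfolding e2 sin_add X_def Y_def by simp
  have c2: "cos ((2*real (Suc n)+1)*h) = Y * cos h - X * sin h"
    unfolding e2 cos_add X_def Y_def by simp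
  have A: "4 * sin h ^ 2 * (\<Sum>k=1..Suc n. real k * sin (real k * (2*h)))
        = cos h * (X * cos h + Y * sin h) - (2*(real n + 1)+1) * sin h * (Y * cos h - X * sin h)"
    using closed_a[of h "Suc n"] s2 c2 by simp
  have split: "(\<Sum>k=1..Suc n. (real (Suc n) - real k + 1) * real k * sin (real k * (2*h)))
     = (\<Sum>k=1..n. (real n - real k + 1) * real k * sin (real k * (2*h))) + (\<Sum>k=1..Suc n. real k * sin (real k * (2*h)))"
  proof -
    have "(\<Sum>k=1..Suc n. (real (Suc n) - real k + 1) * real k * sin (real k * (2*h)))
      = (\<Sum>k=1..n. (real (Suc n) - real k + 1) * real k * sin (real k * (2*h))) + real (Suc n) * sin (real (Suc n) * (2*h))"
      by simp
    also have "(\<Sum>k=1..n. (real (Suc n) - real k + 1) * real k * sin (real k * (2*h)))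
       = (\<Sum>k=1..n. (real n - real k + 1) * real k * sin (real k * (2*h)) + real k * sin (real k * (2*h)))"
      by (rule sum.cong) (auto simp: algebra_simps)
    finally show ?thesis by (simp add: sum.distrib)
  qed
  have alg: "S * (2*S*C - (N + 1) * X') + C * ((C^2 - S^2) - Y') + S * (C * (X' * C + Y' * S) - (2*(N + 1)+1) * S * (Y' * C - X' * S))
     = S * (2*S*C - (N + 1 + 1) * (X' * (C ^ 2 - S ^ 2) + Y' * (2 * S * C))) + C * ((C^2 - S^2) - (Y' * (C ^ 2 - S ^ 2) - X' * (2 * S * C)))"
    if "S^2 + C^2 = 1" for S C X' Y' N :: real using that by algebra
  have "4 * sin h ^ 3 * (\<Sum>k=1..Suc n. (real (Suc n) - real k + 1) * real k * sin (real k * (2*h)))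
     = 4 * sin h ^ 3 * (\<Sum>k=1..n. (real n - real k + 1) * real k * sin (real k * (2*h))) + sin h * (4 * sin h ^ 2 * (\<Sum>k=1..Suc n. real k * sin (real k * (2*h))))"
    unfolding split by (simp add: algebra_simps power3_eq_cube power2_eq_square)
  also have "\<dots> = sin h * (2 * sin h * cos h - (real n + 1) * X) + cos h * ((cos h ^ 2 - sin h ^ 2) - Y)
      + sin h * (cos h * (X * cos h + Y * sin h) - (2*(real n + 1)+1) * sin h * (Y * cos h - X * sin h))"
    unfolding Suc.IH A X_def Y_def sin_double cos_double by simp
  also have "\<dots> = sin h * (sin (2*h) - (real (Suc n) + 1) * sin ((2*real (Suc n)+2)*h)) + cos h * (cos (2*h) - cos ((2*real (Suc n)+2)*h))"
    unfolding s1 c1 sin_double cos_double using alg[OF p] by simp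
  finally show ?case .
qed

lemma closed_c:
  fixes h :: real
  shows "8 * sin h ^ 4 * (\<Sum>k=1..n. (real n - real k + 1) * (real n - real k + 2) * real k * sin (real k * (2*h)))
        = (2*real n+3) * sin h * (2 * cos h + cos ((2*real n+3)*h)) - 3 * cos h * sin ((2*real n+3)*h)"
proof (induction n)
  case 0
  have e: "(2*real 0+3)*h = h + 2*h" by simp
  have alg: "3 * S * (2 * C + (C * (C^2 - S^2) - S * (2*S*C))) - 3 * C * (S * (C^2 - S^2) + C * (2*S*C)) = 0"
    if "S^2 + C^2 = 1" for S C :: real using that by algebra
  show ?case unfolding e sin_add cos_add sin_double cos_double using alg[of "sin h" "cos h"] by simp
next
  case (Suc n)
  define X where "X = sin ((2*real n+3)*h)"
  define Y where "Y = cos ((2*real n+3)*h)"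
  have e1: "(2*real (Suc n)+3)*h = (2*real n+3)*h + 2*h" by (simp add: algebra_simps)
  have e2: "(2*real (Suc n)+2)*h = (2*real n+3)*h + h" by (simp add: algebra_simps)
  have p: "sin h ^ 2 + cos h ^ 2 = 1" by simp
  have s1: "sin ((2*real (Suc n)+3)*h) = X * (cos h ^ 2 - sin h ^ 2) + Y * (2 * sin h * cos h)"
    unfolding e1 sin_add X_def Y_def cos_double sin_double by simp
  have c1: "cos ((2*real (Suc n)+3)*h) = Y * (cos h ^ 2 - sin h ^ 2) - X * (2 * sin h * cos h)"
    unfolding e1 cos_add X_def Y_def cos_double sin_double by simp
  have s2: "sin ((2*real (Suc n)+2)*h) = X * cos h + Y * sin h"
    unfolding e2 sin_add X_def Y_def by simp
  have c2: "cos ((2*real (Suc n)+2)*h) = Y * cos h - X * sin h"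
    unfolding e2 cos_add X_def Y_def by simp
  have B: "4 * sin h ^ 3 * (\<Sum>k=1..Suc n. (real (Suc n) - real k + 1) * real k * sin (real k * (2*h)))
        = sin h * (2 * sin h * cos h - (real n + 1 + 1) * (X * cos h + Y * sin h)) + cos h * ((cos h ^ 2 - sin h ^ 2) - (Y * cos h - X * sin h))"
    using closed_b[of h "Suc n"] s2 c2 unfolding sin_double cos_double by simp
  have split: "(\<Sum>k=1..Suc n. (real (Suc n) - real k + 1) * (real (Suc n) - real k + 2) * real k * sin (real k * (2*h)))
     = (\<Sum>k=1..n. (real n - real k + 1) * (real n - real k + 2) * real k * sin (real k * (2*h))) + 2 * (\<Sum>k=1..Suc n. (real (Suc n) - real k + 1) * real k * sin (real k * (2*h)))"
  proof -
    have "(\<Sum>k=1..Suc n. (real (Suc n) - real k + 1) * (real (Suc n) - real k + 2) * real k * sin (real k * (2*h)))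
      = (\<Sum>k=1..n. (real (Suc n) - real k + 1) * (real (Suc n) - real k + 2) * real k * sin (real k * (2*h))) + 2 * real (Suc n) * sin (real (Suc n) * (2*h))"
      by simp
    also have "(\<Sum>k=1..n. (real (Suc n) - real k + 1) * (real (Suc n) - real k + 2) * real k * sin (real k * (2*h)))
       = (\<Sum>k=1..n. (real n - real k + 1) * (real n - real k + 2) * real k * sin (real k * (2*h)) + 2 * ((real (Suc n) - real k + 1) * real k * sin (real k * (2*h))))"
      by (rule sum.cong) (auto simp: algebra_simps)
    also have "2 * (\<Sum>k=1..Suc n. (real (Suc n) - real k + 1) * real k * sin (real k * (2*h)))
       = 2 * (\<Sum>k=1..n. (real (Suc n) - real k + 1) * real k * sin (real k * (2*h))) + 2 * real (Suc n) * sin (real (Suc n) * (2*h))"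
      by simp
    ultimately show ?thesis by (simp add: sum.distrib sum_distrib_left)
  qed
  have alg: "(2*N+3) * S * (2 * C + Y') - 3 * C * X' + 4 * S * (S * (2 * S * C - (N + 1 + 1) * (X' * C + Y' * S)) + C * ((C ^ 2 - S ^ 2) - (Y' * C - X' * S)))
     = (2*(N+1)+3) * S * (2 * C + (Y' * (C ^ 2 - S ^ 2) - X' * (2 * S * C))) - 3 * C * (X' * (C ^ 2 - S ^ 2) + Y' * (2 * S * C))"
    if "S^2 + C^2 = 1" for S C X' Y' N :: real using that by algebra
  have "8 * sin h ^ 4 * (\<Sum>k=1..Suc n. (real (Suc n) - real k + 1) * (real (Suc n) - real k + 2) * real k * sin (real k * (2*h)))
     = 8 * sin h ^ 4 * (\<Sum>k=1..n. (real n - real k + 1) * (real n - real k + 2) * real k * sin (real k * (2*h))) + 4 * sin h * (4 * sin h ^ 3 * (\<Sum>k=1..Suc n. (real (Suc n) - real k + 1) * real k * sin (real k * (2*h))))"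
    unfolding split by (simp add: algebra_simps power3_eq_cube power2_eq_square power4_eq_xxxx)
  also have "\<dots> = (2*real n+3) * sin h * (2 * cos h + Y) - 3 * cos h * X + 4 * sin h * (sin h * (2 * sin h * cos h - (real n + 1 + 1) * (X * cos h + Y * sin h)) + cos h * ((cos h ^ 2 - sin h ^ 2) - (Y * cos h - X * sin h)))"
    unfolding Suc.IH B X_def Y_def by simp
  also have "\<dots> = (2*real (Suc n)+3) * sin h * (2 * cos h + cos ((2*real (Suc n)+3)*h)) - 3 * cos h * sin ((2*real (Suc n)+3)*h)"
    unfolding s1 c1 using alg[OF p] by simp
  finally show ?case .
qed



lemma cos_lb: fixes y :: real assumes "0 \<le> y" shows "1 - y^2/2 \<le> cos y"
proof -
  let ?g = "\<lambda>y. cos y - 1 + y^2/2"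
  have "\<And>u. 0 \<le> u \<Longrightarrow> u \<le> y \<Longrightarrow> (?g has_real_derivative (- sin u + u)) (at u)"
    by (auto intro!: derivative_eq_intros simp: power2_eq_square)
  moreover have "\<And>u. 0 \<le> u \<Longrightarrow> u \<le> y \<Longrightarrow> 0 \<le> - sin u + u" using sin_x_le_x by simp
  ultimately have "?g 0 \<le> ?g y" by (intro DERIV_nonneg_imp_nondecreasing[OF assms]) blast
  then show ?thesis by simp
qed

lemma sin_lb: fixes y :: real assumes "0 \<le> y" shows "y - y^3/6 \<le> sin y"
proof -
  let ?g = "\<lambda>y. sin y - y + y^3/6"
  have "\<And>u. 0 \<le> u \<Longrightarrow> u \<le> y \<Longrightarrow> (?g has_real_derivative (cos u - 1 + u^2/2)) (at u)"
    by (auto intro!: derivative_eq_intros simp: power2_eq_square)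
  moreover have "\<And>u. 0 \<le> u \<Longrightarrow> u \<le> y \<Longrightarrow> 0 \<le> cos u - 1 + u^2/2" using cos_lb by fastforce
  ultimately have "?g 0 \<le> ?g y" by (intro DERIV_nonneg_imp_nondecreasing[OF assms]) blast
  then show ?thesis by simp
qed

lemma cos_ub: fixes y :: real assumes "0 \<le> y" shows "cos y \<le> 1 - y^2/2 + y^4/24"
proof -
  let ?g = "\<lambda>y. 1 - y^2/2 + y^4/24 - cos y"
  have "\<And>u. 0 \<le> u \<Longrightarrow> u \<le> y \<Longrightarrow> (?g has_real_derivative (- u + u^3/6 + sin u)) (at u)"
    by (auto intro!: derivative_eq_intros simp: power2_eq_square power3_eq_cube)
  moreover have "\<And>u. 0 \<le> u \<Longrightarrow> u \<le> y \<Longrightarrow> 0 \<le> - u + u^3/6 + sin u" using sin_lb by fastforce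
  ultimately have "?g 0 \<le> ?g y" by (intro DERIV_nonneg_imp_nondecreasing[OF assms]) blast
  then show ?thesis by simp
qed

lemma cos_per: "cos (y + 2*pi*real j) = cos y"
proof (induction j)
  case (Suc j)
  have "y + 2*pi*real (Suc j) = (y + 2*pi*real j) + 2*pi" by (simp add: algebra_simps)
  then show ?case using Suc by (metis cos_periodic)
qed simp

lemma sin_per: "sin (y + 2*pi*real j) = sin y"
proof (induction j)
  case (Suc j)
  have "y + 2*pi*real (Suc j) = (y + 2*pi*real j) + 2*pi" by (simp add: algebra_simps)
  then show ?case using Suc by (metis sin_periodic)
qed simp

lemma quadform:
  fixes m s c p q RR :: real
  assumes "0 < m" "0 < s" "0 < c" "p^2 + q^2 = 1"
    and D: "m^2 * s^2 * (4*c^2-1) - 9*c^2 > 4 * m * s * c * RR"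
  shows "m * s * (2*c + (p^2 - q^2)) - 3*c*(2*p*q) > RR"
proof -
  define A where "A = m * s * (2*c+1)"
  define C where "C = m * s * (2*c-1)"
  define B where "B = 3*c"
  have f: "m * s * (2*c + (p^2 - q^2)) - 3*c*(2*p*q) = A*p^2 - 2*B*p*q + C*q^2"
    unfolding A_def B_def C_def using assms(4) by algebra
  have id: "(A+C)*(A*p^2 - 2*B*p*q + C*q^2) - (A*C - B^2) = (A*p - B*q)^2 + (C*q - B*p)^2"
    using assms(4) by algebra
  have AC: "A + C = 4 * m * s * c" unfolding A_def C_def by (simp add: algebra_simps)
  have det: "A*C - B^2 = m^2 * s^2 * (4*c^2-1) - 9*c^2" unfolding A_def C_def B_def by (simp add: power2_eq_square algebra_simps)
  have pos: "0 < A + C" unfolding AC using assms by simp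
  have "(A+C)*(A*p^2 - 2*B*p*q + C*q^2) \<ge> A*C - B^2" using id by (smt (verit) zero_le_power2)
  then have "(A+C)*(A*p^2 - 2*B*p*q + C*q^2) > (A+C)*RR" using det D AC by simp
  then have "A*p^2 - 2*B*p*q + C*q^2 > RR" using pos by (simp add: mult_less_cancel_left_pos)
  then show ?thesis using f by simp
qed



lemma Dcond: fixes m w u :: real
  assumes m7: "7 \<le> m" and w: "0 < w" and u: "u = 3 - 4*w" "0 < u" and mw: "784/100 \<le> m^2 * w"
    and big: "71/100 \<le> w \<Longrightarrow> 9 \<le> m^2 * u"
  shows "m^2 * w * u - 9*(1-w) > 128/9 * m * w^3 * (1-w) * u^2"
proof -
  have q1: "w * u \<le> 9/16"
  proof -
    have "9/16 - w * u = (2*w - 3/4)^2" unfolding u by (simp add: power2_eq_square algebra_simps)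
    then show ?thesis by (metis diff_ge_0_iff_ge zero_le_power2)
  qed
  have q2: "w * (1-w) \<le> 1/4"
  proof -
    have "1/4 - w * (1-w) = (w - 1/2)^2" by (simp add: power2_eq_square algebra_simps)
    then show ?thesis by (metis diff_ge_0_iff_ge zero_le_power2)
  qed
  have wl: "w < 1" using u by simp
  have p1: "(w*u) * (w*(1-w)) \<le> 9/16 * (1/4)"
    using q1 q2 w wl u by (intro mult_mono) auto
  have mwu: "0 \<le> m * w * u" using m7 w u by simp
  have "128/9 * m * w^3 * (1-w) * u^2 = 128/9 * (m * w * u) * ((w*u) * (w*(1-w)))"
    by (simp add: power2_eq_square power3_eq_cube algebra_simps)
  also have "\<dots> \<le> 128/9 * (m * w * u) * (9/16 * (1/4))"
    using p1 mwu by (intro mult_left_mono) auto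
  finally have r1: "128/9 * m * w^3 * (1-w) * u^2 \<le> 2/7 * (7 * (m * w * u))" by simp
  have "7 * (m * w * u) \<le> m * (m * w * u)" using m7 mwu by (intro mult_right_mono) auto
  then have r: "128/9 * m * w^3 * (1-w) * u^2 \<le> 2/7 * (m^2 * w * u)"
    using r1 by (simp add: power2_eq_square algebra_simps)
  have goal: "71/100 * (m^2 * w * u) > 9*(1-w)"
  proof (cases "w \<le> 55/100")
    case True
    have "m^2 * w * u \<ge> 784/100 * u"
      using mw u by (intro mult_right_mono) auto
    then have "71/100 * (m^2 * w * u) \<ge> 71/100 * (784/100 * u)" by (intro mult_left_mono) auto
    then show ?thesis using True u by argo
  next
    case False
    show ?thesis
    proof (cases "w \<le> 71/100")
      case True
      have "m * m \<ge> 7 * 7" using m7 by (intro mult_mono) auto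
      then have "m^2 * (w * u) \<ge> 49 * (w*u)" using w u by (intro mult_right_mono) (auto simp: power2_eq_square)
      moreover have "71/100 * 49 * (w*u) > 9*(1-w)"
      proof -
        have g: "0 \<le> (w - 55/100) * (71/100 - w)" using True False by (intro mult_nonneg_nonneg) auto
        have g2: "(w - 55/100) * (71/100 - w) = 126/100 * w - w^2 - 3905/10000" by (simp add: power2_eq_square field_simps)
        have wu: "w*u = 3*w - 4*w^2" unfolding u by (simp add: power2_eq_square algebra_simps)
        show ?thesis using g g2 wu True by argo
      qed
      ultimately show ?thesis by (simp add: algebra_simps)
    next
      case False
      then have "9 \<le> m^2 * u" using big by simp
      then have "m^2 * u * w \<ge> 9 * w" using w by (intro mult_right_mono) auto
      then have "71/100*(m^2 * w * u) \<ge> 71/100*(9 * w)" by (simp add: algebra_simps)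
      then show ?thesis using False by argo
    qed
  qed
  show ?thesis using r goal wl by argo
qed



lemma key:
  fixes n :: nat and h :: real
  assumes n2: "2 \<le> n" and h0: "0 < h" and h1: "h < pi/3" and big: "pi < 2*real n*h"
  shows "(2*real n+3) * sin h * (2*cos h + cos ((2*real n+3)*h)) - 3*cos h * sin ((2*real n+3)*h)
     > 32/9 * sin h^5 * cos h * (4*cos h^2 - 1)^2"
proof -
  define m where "m = 2*real n+3"
  define s where "s = sin h"
  define c where "c = cos h"
  define e where "e = pi/3 - h"
  define S where "S = sin e"
  define C where "C = cos e"
  define r where "r = sqrt 3"
  define u where "u = 4*c^2 - 1"
  define rho where "rho = 32/9 * s^5 * c * u^2"
  have nr: "2 \<le> real n" using n2 by simp
  have m7: "7 \<le> m" unfolding m_def using nr by simp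
  have pl: "(31415/10000) \<le> pi" and pu: "pi \<le> (31416/10000)" using pi_approx by simp_all
  have e0: "0 < e" and e1: "e < pi/3" unfolding e_def using h0 h1 by simp_all
  have eb: "e \<le> (10473/10000)" using e1 pu by simp
  have r2: "r^2 = 3" unfolding r_def by simp
  have rl: "(1732/1000) \<le> r" unfolding r_def by (rule real_le_rsqrt) (simp add: power2_eq_square)
  have ru: "r \<le> (17321/10000)" unfolding r_def by (rule real_le_lsqrt) (simp_all add: power2_eq_square)
  have s0: "0 < s" unfolding s_def using h0 h1 pl by (intro sin_gt_zero) simp_all
  have c0: "0 < c" unfolding c_def using h0 h1 pl by (intro cos_gt_zero) simp_all
  have hh: "h = pi/3 - e" unfolding e_def by simp
  have sC: "s = r/2*C - S/2" unfolding s_def hh sin_diff sin_60 cos_60 S_def C_def r_def by simp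
  have cC: "c = C/2 + r/2*S" unfolding c_def hh cos_diff sin_60 cos_60 S_def C_def r_def by simp
  have SC: "S^2 + C^2 = 1" unfolding S_def C_def by simp
  have S0: "0 < S" unfolding S_def using e0 e1 pl by (intro sin_gt_zero) simp_all
  have Sle: "S \<le> e" unfolding S_def using e0 sin_x_le_x by simp
  have Slb: "e - e^3/6 \<le> S" unfolding S_def using e0 sin_lb by simp
  have Clb: "1 - e^2/2 \<le> C" unfolding C_def using e0 cos_lb by simp
  have Cle: "C \<le> 1" unfolding C_def by simp
  have e2b: "e^2 \<le> (1097/1000)"
  proof -
    have "e*e \<le> (10473/10000)*(10473/10000)" using e0 eb by (intro mult_mono) simp_all
    then show ?thesis by (simp add: power2_eq_square)
  qed
  have C0: "0 < C" using Clb e2b by simp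
  have uS: "u = 2*S^2 + 2*r*(C*S)"
  proof -
    have "4*(C/2 + r/2*S)^2 = (C + r*S)^2" by (simp add: power2_eq_square field_simps)
    moreover have "(C + r*S)^2 - 1 = 2*S^2 + 2*r*(C*S)"
    proof -
      have "(C + r*S)^2 = C^2 + 2*r*(C*S) + r^2*S^2" by (simp add: power2_eq_square algebra_simps)
      then have "(C + r*S)^2 = C^2 + 2*r*(C*S) + 3*S^2" using r2 by simp
      then show ?thesis using SC by linarith
    qed
    ultimately show ?thesis unfolding u_def cC by simp
  qed
  have u0: "0 < u" unfolding uS using S0 C0 rl by (simp add: add_pos_nonneg)

  have f_eq: "(2*real n+3) * sin h * (2*cos h + cos ((2*real n+3)*h)) - 3*cos h * sin ((2*real n+3)*h)
      = m * s * (2*c + cos (m*h)) - 3*c* sin (m*h)" unfolding m_def s_def c_def by simp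
  have rho_eq: "32/9 * sin h^5 * cos h * (4*cos h^2 - 1)^2 = rho" unfolding rho_def u_def s_def c_def by simp
  have goal: "m * s * (2*c + cos (m*h)) - 3*c* sin (m*h) > rho"
  proof (cases "3/m^2 \<le> e")
    case True
    have c2: "c^2 = 1 - s^2" unfolding s_def c_def by (simp add: cos_squared_eq)
    have uw: "u = 3 - 4* s^2" unfolding u_def c2 by simp
    have me: "3 \<le> m^2 * e" using True m7 by (simp add: field_simps)
    define y where "y = pi/(2*real n)"
    have nn: "0 < 2*real n" using nr by simp
    have y0: "0 < y" unfolding y_def using nn by simp
    have ny: "2*real n*y = pi" unfolding y_def using nn by simp
    have yh: "y < h" using big ny nn by (metis mult_less_cancel_left_pos mult.assoc)
    have y4: "y \<le> pi/4" unfolding y_def using nr by (intro divide_left_mono) simp_all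
    have hb: "h \<le> (10473/10000)" using h1 pu by simp
    have sh: "h - h^3/6 \<le> s" unfolding s_def using h0 sin_lb by simp
    have mono: "y - y^3/6 \<le> h - h^3/6"
    proof -
      have a1: "h*h \<le> (10473/10000)*(10473/10000)" using h0 hb by (intro mult_mono) simp_all
      have a2: "h*y \<le> (10473/10000)*(10473/10000)" using h0 hb y0 yh by (intro mult_mono) simp_all
      have a3: "y*y \<le> (10473/10000)*(10473/10000)" using y0 hb yh by (intro mult_mono) simp_all
      have "0 \<le> (h - y)*(1 - (h*h + h*y + y*y)/6)" using a1 a2 a3 yh by (intro mult_nonneg_nonneg) simp_all
      moreover have "(h - h^3/6) - (y - y^3/6) = (h - y)*(1 - (h*h + h*y + y*y)/6)"
        by (simp add: power3_eq_cube field_simps)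
      ultimately show ?thesis by simp
    qed
    have ms1: "2*real n*(y - y^3/6) \<le> m* s"
    proof -
      have "2*real n*(y - y^3/6) \<le> 2*real n* s" using mono sh nn by (intro mult_left_mono) simp_all
      also have "\<dots> \<le> m* s" unfolding m_def using s0 by (intro mult_right_mono) simp_all
      finally show ?thesis .
    qed
    have ms2: "2*real n*(y - y^3/6) = pi - pi*y^2/6"
    proof -
      have "2*real n*(y - y^3/6) = 2*real n*y - (2*real n*y)*y^2/6" by (simp add: power3_eq_cube power2_eq_square algebra_simps)
      then show ?thesis unfolding ny .
    qed
    have y2: "pi*y^2 \<le> pi*(pi*pi)/16"
    proof -
      have "y*y \<le> (pi/4)*(pi/4)" using y0 y4 by (intro mult_mono) simp_all
      then have "pi * (y*y) \<le> pi * ((pi/4)*(pi/4))" by (intro mult_left_mono) simp_all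
      then show ?thesis by (simp add: power2_eq_square)
    qed
    have p3: "pi*(pi*pi) \<le> (31416/10000)*((31416/10000)*(31416/10000))"
      using pu by (intro mult_mono) (simp_all add: mult_mono)
    have ms: "(28/10) \<le> m* s" using ms1 ms2 y2 p3 pl by argo
    have mw: "784/100 \<le> m^2 * s^2"
    proof -
      have "(28/10)*(28/10) \<le> (m* s)*(m* s)" using ms by (intro mult_mono) simp_all
      then show ?thesis by (simp add: power2_eq_square algebra_simps)
    qed
    have bigu: "9 \<le> m^2 * u" if w: "71/100 \<le> s^2"
    proof -
      have u16: "u \<le> (16/100)" using w uw by simp
      have uge: "2*r*(C*S) \<le> u" unfolding uS by simp
      show ?thesis
      proof (cases "e \<le> (3/10)")
        case True
        have "e^3 = e * e^2" by (simp add: power3_eq_cube power2_eq_square)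
        moreover have "e * e^2 \<le> e * (9/100)"
        proof -
          have "e*e \<le> (3/10)*(3/10)" using e0 True by (intro mult_mono) simp_all
          then show ?thesis using e0 by (intro mult_left_mono) (simp_all add: power2_eq_square)
        qed
        ultimately have S1: "(985/1000)*e \<le> S" using Slb by simp
        have "e^2 \<le> (9/100)"
        proof -
          have "e*e \<le> (3/10)*(3/10)" using e0 True by (intro mult_mono) simp_all
          then show ?thesis by (simp add: power2_eq_square)
        qed
        then have C1: "(955/1000) \<le> C" using Clb by simp
        have X: "(955/1000)*((985/1000)*e) \<le> C*S" using S1 C1 e0 C0 by (intro mult_mono) simp_all
        have "(1732/1000)*((955/1000)*((985/1000)*e)) \<le> r*(C*S)"
          by (rule mult_mono[OF rl X]) (use e0 C0 S0 rl in auto)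
        then have "(3258/1000)*e \<le> u" using uge e0 by argo
        then have "m^2*((3258/1000)*e) \<le> m^2*u" by (intro mult_left_mono) simp_all
        then show ?thesis using me by simp
      next
        case False
        have S1: "(2955/10000) \<le> S"
        proof -
          have a1: "e*e \<le> (1097/1000)" using e2b by (simp add: power2_eq_square)
          have "0 \<le> (e - (3/10))*(1 - (e*e + (3/10)*e + (9/100))/6)" using a1 eb False by (intro mult_nonneg_nonneg) simp_all
          moreover have "(e - e^3/6) - (2955/10000) = (e - (3/10))*(1 - (e*e + (3/10)*e + (9/100))/6)"
            by (simp add: power3_eq_cube field_simps)
          ultimately show ?thesis using Slb by simp
        qed
        have C1: "(4515/10000) \<le> C" using Clb e2b by simp
        have X: "(4515/10000)*(2955/10000) \<le> C*S" using S1 C1 C0 by (intro mult_mono) simp_all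
        have "(1732/1000)*((4515/10000)*(2955/10000)) \<le> r*(C*S)"
          by (rule mult_mono[OF rl X]) (use C0 S0 rl in auto)
        then show ?thesis using uge u16 by argo
      qed
    qed
    have Dc: "m^2 * s^2 * u - 9*(1-s^2) > 128/9 * m * (s^2)^3 * (1-s^2) * u^2"
      using Dcond[OF m7 _ uw u0 mw bigu] s0 by simp
    have eq1: "4 * m * s * c * rho = 128/9 * m * (s^2)^3 * (c^2) * u^2"
      unfolding rho_def by (simp add: power2_eq_square power3_eq_cube eval_nat_numeral field_simps)
    have D0: "m^2 * s^2 * u - 9*c^2 > 4 * m * s * c * rho"
      using Dc unfolding eq1 c2 by simp
    have D: "m^2 * s^2 * (4*c^2-1) - 9*c^2 > 4 * m * s * c * rho"
      using D0 unfolding u_def .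
    have mpos: "0 < m" using m7 by simp
    have Q: "m * s * (2*c + ((cos (m*h/2))^2 - (sin (m*h/2))^2)) - 3*c*(2*(cos (m*h/2))*(sin (m*h/2))) > rho"
      by (rule quadform[OF mpos s0 c0 _ D]) simp
    have cd: "cos (m*h) = (cos (m*h/2))^2 - (sin (m*h/2))^2" using cos_double[of "m*h/2"] by simp
    have sd: "sin (m*h) = 2*(cos (m*h/2))*(sin (m*h/2))" using sin_double[of "m*h/2"] by (simp add: algebra_simps)
    show ?thesis unfolding cd sd using Q .
  next
    case False
    have mpos: "0 < m" using m7 by simp
    have m2: "49 \<le> m^2"
    proof -
      have "7*7 \<le> m*m" using m7 by (intro mult_mono) simp_all
      then show ?thesis by (simp add: power2_eq_square)
    qed
    have em: "e * m^2 < 3" using False mpos by (simp add: field_simps)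
    have eb3: "e \<le> 3/49"
    proof -
      have "e * 49 \<le> e * m^2" using m2 e0 by (intro mult_left_mono) simp_all
      then show ?thesis using em by simp
    qed
    define E where "E = e^2"
    have E0: "0 < E" unfolding E_def using e0 by simp
    have Eb: "E \<le> 9/2401"
    proof -
      have "e*e \<le> (3/49)*(3/49)" using e0 eb3 by (intro mult_mono) simp_all
      then show ?thesis unfolding E_def by (simp add: power2_eq_square)
    qed
    have e3: "e^3 \<le> 3/49 * E"
    proof -
      have "e*E \<le> 3/49 * E" using eb3 E0 by (intro mult_right_mono) simp_all
      then show ?thesis unfolding E_def by (simp add: power3_eq_cube power2_eq_square)
    qed
    define a where "a = m*e"
    have a0: "0 < a" unfolding a_def using mpos e0 by simp
    have ab: "a \<le> 3/7"
    proof -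
      have "a * m = e * m^2" unfolding a_def by (simp add: power2_eq_square)
      moreover have "a * 7 \<le> a * m" using m7 a0 by (intro mult_left_mono) simp_all
      ultimately show ?thesis using em by simp
    qed
    have a2: "a^2 \<le> 9/49"
    proof -
      have "a*a \<le> (3/7)*(3/7)" using a0 ab by (intro mult_mono) simp_all
      then show ?thesis by (simp add: power2_eq_square)
    qed
    have Cl2: "(998/1000) \<le> C" using Clb Eb unfolding E_def by simp
    have sl: "(83/100) \<le> s"
    proof -
      have "(1732/1000) * (998/1000) \<le> r * C" using rl Cl2 C0 by (intro mult_mono) simp_all
      moreover have "s = (r * C)/2 - S/2" unfolding sC by simp
      ultimately show ?thesis using Sle eb3 by argo
    qed
    have cu: "c \<le> (56/100)"
    proof -
      have "r * S \<le> (17321/10000) * (3/49)" using ru Sle eb3 S0 by (intro mult_mono) simp_all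
      moreover have "c = C/2 + (r * S)/2" unfolding cC by simp
      ultimately show ?thesis using Cle by argo
    qed
    have s1: "s \<le> 1" unfolding s_def by simp
    have uu: "u \<le> (36/10) * e"
    proof -
      have "S*S \<le> e*e" using S0 Sle by (intro mult_mono) simp_all
      moreover have "e*e \<le> (3/49)*e" using e0 eb3 by (intro mult_right_mono) simp_all
      moreover have "C*S \<le> 1*e" using Cle Sle S0 by (intro mult_mono) simp_all
      moreover have "r*(C*S) \<le> (17321/10000)*e"
      proof -
        have "r*(C*S) \<le> (17321/10000)*(1*e)" by (rule mult_mono[OF ru \<open>C*S \<le> 1*e\<close>]) (use C0 S0 in auto)
        then show ?thesis by simp
      qed
      ultimately show ?thesis unfolding uS power2_eq_square using e0 by argo
    qed
    have u2: "u^2 \<le> (1296/100) * E"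
    proof -
      have "u*u \<le> ((36/10)*e)*((36/10)*e)" using uu u0 by (intro mult_mono) simp_all
      then show ?thesis unfolding E_def by (simp add: power2_eq_square)
    qed
    have rho_b: "rho \<le> 32/9 * (c * ((1296/100) * E))"
    proof -
      have s5: "s^5 \<le> 1" using s0 s1 by (simp add: power_le_one)
      have "s^5 * (c * u^2) \<le> 1 * (c * u^2)" using s5 c0 by (intro mult_right_mono) simp_all
      moreover have "c * u^2 \<le> c * ((1296/100) * E)" using u2 c0 by (intro mult_left_mono) simp_all
      ultimately show ?thesis unfolding rho_def by (simp add: algebra_simps)
    qed
    have mh: "m*h = m*pi/3 - a" unfolding a_def hh by (simp add: algebra_simps)
    obtain j where nj: "n = 3*j + n mod 3" by (metis div_mod_decomp mult.commute)
    have nm: "n mod 3 = 0 \<or> n mod 3 = 1 \<or> n mod 3 = 2" by arith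

    have ms_l: "(581/100) \<le> m * s"
    proof -
      have "7*(83/100) \<le> m * s" by (rule mult_mono[OF m7 sl]) (use mpos in simp_all)
      then show ?thesis by simp
    qed
    have rb2: "rho \<le> (4608/100) * (c * E)" using rho_b by (simp add: algebra_simps)
    have ca: "(9/10) \<le> cos a"
    proof -
      have "1 - a^2/2 \<le> cos a" using a0 cos_lb by simp
      then show ?thesis using a2 by simp
    qed
    have sa0: "0 \<le> sin a" using a0 ab pl by (intro sin_ge_zero) simp_all
    have sal: "sin a \<le> a" using a0 sin_x_le_x by simp
    have common: "m * s * (2*c + cos (m*h)) - 3*c * sin (m*h) > rho" if ct: "0 \<le> cos (m*h)"
    proof -
      have A1: "0 \<le> (m * s) * cos (m*h)" using ms_l ct by simp
      have A2: "c * sin (m*h) \<le> c * 1" using c0 by (intro mult_left_mono) simp_all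
      have A3: "(581/100) * c \<le> (m * s) * c" using ms_l c0 by (intro mult_right_mono) simp_all
      have A4: "c * E \<le> c * (9/2401)" using Eb c0 by (intro mult_left_mono) simp_all
      have fe: "m * s * (2*c + cos (m*h)) - 3*c * sin (m*h) = 2*((m * s) * c) + (m * s) * cos (m*h) - 3*(c * sin (m*h))"
        by (simp add: algebra_simps)
      show ?thesis unfolding fe using A1 A2 A3 A4 rb2 c0 by argo
    qed
    consider (r0) "n mod 3 = 0" | (r1) "n mod 3 = 1" | (r2) "n mod 3 = 2" using nm by argo
    then show ?thesis
    proof cases
      case r2
      have "real n = 3*real j + 2" using nj r2 by (metis of_nat_add of_nat_mult of_nat_numeral)
      then have mv: "m = 6*real j + 7" unfolding m_def by simp
      have "m*pi/3 = pi/3 + 2*pi*real (j+1)" unfolding mv by (simp add: field_simps)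
      then have th: "m*h = (pi/3 - a) + 2*pi*real (j+1)" using mh by argo
      have ct: "cos (m*h) = cos a/2 + r/2 * sin a" unfolding th cos_per cos_diff cos_60 sin_60 r_def by simp
      have "0 \<le> r/2 * sin a" using rl sa0 by simp
      then have "0 \<le> cos (m*h)" unfolding ct using ca by simp
      then show ?thesis by (rule common)
    next
      case r1
      have "real n = 3*real j + 1" using nj r1 by (metis of_nat_add of_nat_mult of_nat_numeral of_nat_1)
      then have mv: "m = 6*real j + 5" unfolding m_def by simp
      have "m*pi/3 = -(pi/3) + 2*pi*real (j+1)" unfolding mv by (simp add: field_simps)
      then have th: "m*h = -(pi/3 + a) + 2*pi*real (j+1)" using mh by argo
      have ct: "cos (m*h) = cos a/2 - (r * sin a)/2"
      proof -
        have "cos (m*h) = cos (pi/3 + a)" unfolding th cos_per cos_minus by simp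
        then show ?thesis by (simp add: cos_add cos_60 sin_60 r_def)
      qed
      have "r * sin a \<le> (17321/10000) * (3/7)" using ru sal ab sa0 by (intro mult_mono) simp_all
      then have "0 \<le> cos (m*h)" unfolding ct using ca by simp
      then show ?thesis by (rule common)
    next
      case r0
      have nj3: "n = 3*j" using nj r0 by simp
      then have j1: "1 \<le> j" using n2 by simp
      have "real n = 3*real j" using nj3 by simp
      then have mv: "m = 6*real j + 3" unfolding m_def by simp
      have m9: "9 \<le> m" unfolding mv using j1 by simp
      have "m*pi/3 = pi + 2*pi*real j" unfolding mv by (simp add: field_simps)
      then have th: "m*h = (pi - a) + 2*pi*real j" using mh by argo
      have cm: "cos (m*h) = - cos a" unfolding th cos_per by simp
      have sm: "sin (m*h) = sin a" unfolding th sin_per by simp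
      have E2: "(49/100)*a^2 \<le> 1 - cos a"
      proof -
        have "cos a \<le> 1 - a^2/2 + a^4/24" using a0 cos_ub by simp
        moreover have "a^4 \<le> (9/49)*a^2"
        proof -
          have "a^2 * a^2 \<le> (9/49)*a^2" using a2 by (intro mult_right_mono) simp_all
          then show ?thesis by (simp add: power2_eq_square power4_eq_xxxx)
        qed
        ultimately show ?thesis using zero_le_power2[of a] by argo
      qed
      have E1: "-(395/100)*E \<le> s*(2*c-1) - 3*c*e"
      proof -
        have s2: "2* s = r*C - S" unfolding sC by simp
        have c2': "2*c = C + r*S" unfolding cC by simp
        have id4: "4*(s*(2*c-1) - 3*c*e) = 2*(r*(2*C^2-1-C)) + 4*(C*S) + 2*S - 6*(C*e) - 6*(r*(S*e))"
          using s2 c2' r2 SC by algebra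
        have B1: "-(3/2)*E \<le> 2*C^2-1-C"
        proof -
          have "2*C^2-1-C = 3*(C - 1) + 2*(C-1)^2" by (simp add: power2_eq_square algebra_simps)
          moreover have "0 \<le> 2*(C-1)^2" by simp
          ultimately show ?thesis using Clb unfolding E_def by argo
        qed
        have B1r: "-((17321/10000)*((3/2)*E)) \<le> r*(2*C^2-1-C)"
        proof -
          have "r*(-(3/2)*E) \<le> r*(2*C^2-1-C)" using B1 rl by (intro mult_left_mono) simp_all
          moreover have "r*((3/2)*E) \<le> (17321/10000)*((3/2)*E)" using ru E0 by (intro mult_right_mono) simp_all
          moreover have "r*(-(3/2)*E) = -(r*((3/2)*E))" by simp
          ultimately show ?thesis by argo
        qed
        have B2: "(1-C)*S \<le> (E/2)*e" using Clb Sle S0 E0 unfolding E_def by (intro mult_mono) simp_all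
        have B2e: "(E/2)*e = e^3/2" unfolding E_def by (simp add: power3_eq_cube power2_eq_square)
        have B2c: "C*S = S - (1-C)*S" by (simp add: algebra_simps)
        have B3: "C*e \<le> e" using Cle e0 by (simp add: mult_right_le_one_le)
        have B4: "r*(S*e) \<le> (17321/10000)*E"
        proof -
          have "S*e \<le> e*e" using Sle e0 by (intro mult_right_mono) simp_all
          then have "S*e \<le> E" unfolding E_def by (simp add: power2_eq_square)
          then show ?thesis using ru S0 e0 E0 by (intro mult_mono) simp_all
        qed
        show ?thesis using id4 B1r B2 B2e B2c B3 B4 Slb e3 E0 by argo
      qed
      have sa: "c * sin a \<le> c * a" using sal c0 by (intro mult_left_mono) simp_all
      have T2a: "(m * s) * ((49/100)*a^2) \<le> (m * s) * (1 - cos a)" using E2 ms_l by (intro mult_left_mono) simp_all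
      define K where "K = m * E"
      have K9: "9 * E \<le> K" unfolding K_def using m9 E0 by (intro mult_right_mono) simp_all
      have T1: "m * (-(395/100)*E) \<le> m * (s*(2*c-1) - 3*c*e)" using E1 m7 by (intro mult_left_mono) simp_all
      have m2s: "81 * (83/100) \<le> m^2 * s"
      proof -
        have "9*9 \<le> m*m" using m9 by (intro mult_mono) simp_all
        then have "81 * (83/100) \<le> (m*m) * s" using sl by (intro mult_mono) simp_all
        then show ?thesis by (simp add: power2_eq_square)
      qed
      have T2b: "(81 * (83/100)) * K \<le> (m^2 * s) * K" using m2s K9 E0 by (intro mult_right_mono) simp_all
      have eqs: "(m * s) * ((49/100)*a^2) = (49/100)*((m^2 * s) * K)"
        unfolding a_def K_def E_def by (simp add: power2_eq_square algebra_simps)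
      have eqa: "c * a = m * (c * e)" unfolding a_def by (simp add: algebra_simps)
      have fe: "m * s * (2*c + cos (m*h)) - 3*c * sin (m*h) = m * (s*(2*c-1) - 3*c*e) + (m * s) * (1 - cos a) + 3*(m * (c * e)) - 3*(c * sin a)"
        unfolding cm sm by (simp add: algebra_simps)
      have T1': "m * (-(395/100)*E) = -(395/100)*K" unfolding K_def by (simp add: algebra_simps)
      have cE: "c * E \<le> (56/100) * E" using cu E0 by (intro mult_right_mono) simp_all
      show ?thesis unfolding fe using T1 T1' T2a T2b eqs eqa sa K9 cE rb2 E0 by argo
    qed
  qed
  show ?thesis using goal f_eq rho_eq by simp
qed



lemma sum_real_form:
  fixes x :: real
  shows "(\<Sum>k=1..n. real ((n - k + 1) * (n - k + 2) * k) * sin (real k * x))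
       = (\<Sum>k=1..n. (real n - real k + 1) * (real n - real k + 2) * real k * sin (real k * x))"
proof (rule sum.cong)
  fix k assume "k \<in> {1..n}"
  then have kn: "k \<le> n" by simp
  have d: "real (n - k) = real n - real k" using kn by (simp add: of_nat_diff)
  have "real ((n - k + 1) * (n - k + 2) * k) = (real (n - k) + 1) * (real (n - k) + 2) * real k" by (simp only: of_nat_mult of_nat_add of_nat_1 of_nat_numeral)
  then show "real ((n - k + 1) * (n - k + 2) * k) * sin (real k * x) = (real n - real k + 1) * (real n - real k + 2) * real k * sin (real k * x)"
    unfolding d by simp
qed simp

lemma part1:
  fixes n :: nat and x :: real
  assumes n1: "1 \<le> n" and x0: "0 < x" and x1: "x < 2 * pi / 3"
  shows "(\<Sum>k=1..n. real ((n - k + 1) * (n - k + 2) * k) * sin (real k * x)) > 2 / 9 * sin x * (1 + 2 * cos x) ^ 2"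
proof -
  have sx: "0 < sin x" using x0 x1 by (intro sin_gt_zero) simp_all
  have sq9: "(1 + 2 * cos x) ^ 2 \<le> 9"
  proof -
    have "-1 \<le> cos x" "cos x \<le> 1" by simp_all
    then have "(3 - (1 + 2*cos x)) * (3 + (1 + 2*cos x)) \<ge> 0" by (intro mult_nonneg_nonneg) linarith+
    then show ?thesis by (simp add: power2_eq_square algebra_simps)
  qed
  have rhs_le: "2 / 9 * sin x * (1 + 2 * cos x) ^ 2 \<le> 2 * sin x"
  proof -
    have "sin x * (1 + 2 * cos x) ^ 2 \<le> sin x * 9" using sq9 sx by (intro mult_left_mono) simp_all
    then show ?thesis by simp
  qed
  show ?thesis
  proof (cases "n = 1")
    case True
    have cx: "cos x < 1" using cos_monotone_0_pi[of 0 x] x0 x1 by simp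
    have "(1 + 2 * cos x) ^ 2 < 9"
    proof -
      have "-1 \<le> cos x" by simp
      then have "(3 - (1 + 2*cos x)) * (3 + (1 + 2*cos x)) > 0" using cx by (intro mult_pos_pos) linarith+
      then show ?thesis by (simp add: power2_eq_square algebra_simps)
    qed
    then have "sin x * (1 + 2 * cos x) ^ 2 < sin x * 9" using sx by (intro mult_strict_left_mono) simp_all
    then show ?thesis using True by simp
  next
    case False
    then have n2: "2 \<le> n" using n1 by simp
    show ?thesis
    proof (cases "real n * x \<le> pi")
      case True
      let ?g = "\<lambda>k. (real n - real k + 1) * (real n - real k + 2) * real k * sin (real k * x)"
      have nonneg: "\<forall>k\<in>{1..n} - {1}. 0 \<le> ?g k"
      proof
        fix k assume k: "k \<in> {1..n} - {1}"
        then have kn: "real k \<le> real n" by simp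
        have "real k * x \<le> real n * x" using kn x0 by (intro mult_right_mono) simp_all
        then have "real k * x \<le> pi" using True by linarith
        then have "0 \<le> sin (real k * x)" using x0 by (intro sin_ge_zero) simp_all
        then show "0 \<le> ?g k" using kn by simp
      qed
      have "?g 1 \<le> (\<Sum>k=1..n. ?g k)" by (rule member_le_sum) (use n1 nonneg in auto)
      moreover have "?g 1 = real n * (real n + 1) * sin x" by simp
      moreover have "6 * sin x \<le> real n * (real n + 1) * sin x"
      proof -
        have "2 * 3 \<le> real n * (real n + 1)" using n2 by (intro mult_mono) simp_all
        then show ?thesis using sx by (intro mult_right_mono) simp_all
      qed
      ultimately show ?thesis unfolding sum_real_form using rhs_le sx by argo
    next
      case False
      define h where "h = x/2"
      have h0: "0 < h" and h1: "h < pi/3" unfolding h_def using x0 x1 by simp_all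
      have big: "pi < 2*real n*h" unfolding h_def using False by simp
      note K = key[OF n2 h0 h1 big]
      note CF = closed_c[of h n]
      have xh: "x = 2*h" unfolding h_def by simp
      have s0: "0 < sin h" using h0 h1 by (intro sin_gt_zero) simp_all
      have s4: "0 < 8 * sin h ^ 4" using s0 by simp
      have rhs: "32/9 * sin h^5 * cos h * (4*cos h^2 - 1)^2 = 8 * sin h ^ 4 * (2 / 9 * sin x * (1 + 2 * cos x) ^ 2)"
        unfolding xh sin_double cos_double_cos by (simp add: power2_eq_square eval_nat_numeral algebra_simps)
      have "8 * sin h ^ 4 * (2 / 9 * sin x * (1 + 2 * cos x) ^ 2)
           < 8 * sin h ^ 4 * (\<Sum>k=1..n. (real n - real k + 1) * (real n - real k + 2) * real k * sin (real k * (2*h)))"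
        using K CF rhs by argo
      then have "2 / 9 * sin x * (1 + 2 * cos x) ^ 2 < (\<Sum>k=1..n. (real n - real k + 1) * (real n - real k + 2) * real k * sin (real k * (2*h)))"
        using s4 by (simp add: mult_less_cancel_left_pos)
      then show ?thesis unfolding sum_real_form xh by simp
    qed
  qed
qed

lemma part2:
  fixes c :: real
  assumes c29: "c > 2 / 9"
  shows "\<not> (\<forall>n::nat. \<forall>x::real. n \<ge> 1 \<longrightarrow> 0 < x \<longrightarrow> x < 2 * pi / 3 \<longrightarrow>
                 (\<Sum>k=1..n. real ((n - k + 1) * (n - k + 2) * k) * sin (real k * x))
                   > c * sin x * (1 + 2 * cos x) ^ 2)"
proof
  assume H: "\<forall>n::nat. \<forall>x::real. n \<ge> 1 \<longrightarrow> 0 < x \<longrightarrow> x < 2 * pi / 3 \<longrightarrow>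
                 (\<Sum>k=1..n. real ((n - k + 1) * (n - k + 2) * k) * sin (real k * x))
                   > c * sin x * (1 + 2 * cos x) ^ 2"
  have cpos: "0 < c" using c29 by simp
  define q where "q = sqrt (2/c)"
  have q0: "0 < q" unfolding q_def using cpos by simp
  have q2: "q^2 = 2/c" unfolding q_def using cpos by simp
  have "2/c < 9" using c29 cpos by (simp add: field_simps)
  then have q3: "q < 3"
  proof -
    have "q^2 < 3^2" using q2 \<open>2/c < 9\<close> by simp
    then show ?thesis by (rule power_less_imp_less_base) simp
  qed
  define x where "x = sqrt (3 - q)"
  have x0: "0 < x" unfolding x_def using q3 by simp
  have x2: "x^2 = 3 - q" unfolding x_def using q3 by simp
  have xlt: "x < 2 * pi / 3"
  proof -
    have "x^2 < 2^2" using x2 q0 by simp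
    then have "x < 2" by (rule power_less_imp_less_base) simp
    moreover have "2 < 2 * pi / 3" using pi_gt3 by simp
    ultimately show ?thesis by simp
  qed
  have "(\<Sum>k=1..(1::nat). real ((1 - k + 1) * (1 - k + 2) * k) * sin (real k * x)) > c * sin x * (1 + 2 * cos x) ^ 2"
    using H x0 xlt by auto
  then have lt: "2 * sin x > c * sin x * (1 + 2 * cos x) ^ 2" by simp
  have sx: "0 < sin x" using x0 xlt pi_gt3 by (intro sin_gt_zero) simp_all
  have "1 - x^2/2 \<le> cos x" using x0 cos_lb by simp
  then have qc: "q \<le> 1 + 2 * cos x" using x2 by argo
  have "q^2 \<le> (1 + 2 * cos x)^2" using qc q0 by (intro power_mono) simp_all
  then have "c * q^2 \<le> c * (1 + 2 * cos x)^2" using cpos by (intro mult_left_mono) simp_all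
  then have "2 \<le> c * (1 + 2 * cos x)^2" using q2 cpos by simp
  then have "sin x * 2 \<le> sin x * (c * (1 + 2 * cos x)^2)" using sx by (intro mult_left_mono) simp_all
  then show False using lt by (simp add: algebra_simps)
qed

theorem theorem5:
  shows "(\<forall>n::nat. \<forall>x::real. n \<ge> 1 \<longrightarrow> 0 < x \<longrightarrow> x < 2 * pi / 3 \<longrightarrow>
            (\<Sum>k=1..n. real ((n - k + 1) * (n - k + 2) * k) * sin (real k * x))
              > 2 / 9 * sin x * (1 + 2 * cos x) ^ 2)
       \<and> (\<forall>c::real. c > 2 / 9 \<longrightarrow>
            \<not> (\<forall>n::nat. \<forall>x::real. n \<ge> 1 \<longrightarrow> 0 < x \<longrightarrow> x < 2 * pi / 3 \<longrightarrow>
                 (\<Sum>k=1..n. real ((n - k + 1) * (n - k + 2) * k) * sin (real k * x))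
                   > c * sin x * (1 + 2 * cos x) ^ 2))"
  using part1 part2 by blast

end
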